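(* Let $\mathbf{P}_A,\mathbf{P}_B,\mathbf{Q}_A,\mathbf{Q}_B\in\mathbb{R}^{n\times n}$ be symmetric positive definite and, for $\omega\in[0,1]$, $\bar\omega=1-\omega$, let $\mathbf{H}_{\mathrm{SCI}}(\omega)=\omega(\mathbf{P}_A+\omega\mathbf{Q}_A)^{-1}+\bar\omega(\mathbf{P}_B+\bar\omega\mathbf{Q}_B)^{-1}$. Then for all $\omega\in[0,1]$, the second derivative satisfies $\mathbf{H}_{\mathrm{SCI}}''(\omega)\prec0$.
   Context: $\prec 0$ means negative definite; the derivative is taken with respect to $\omega$. *)

theory Defs
  imports "HOL-Analysis.Analysis"
begin

definition sym_pos_def :: "real^'n^'n \<Rightarrow> bool" where
  "sym_pos_def M \<longleftrightarrow> transpose M = M \<and> (\<forall>x. x \<noteq> 0 \<longrightarrow> 0 < x \<bullet> (M *v x))"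

definition sym_neg_def :: "real^'n^'n \<Rightarrow> bool" where
  "sym_neg_def M \<longleftrightarrow> transpose M = M \<and> (\<forall>x. x \<noteq> 0 \<longrightarrow> x \<bullet> (M *v x) < 0)"

definition H_SCI :: "real^'n^'n \<Rightarrow> real^'n^'n \<Rightarrow> real^'n^'n \<Rightarrow> real^'n^'n \<Rightarrow> real \<Rightarrow> real^'n^'n" where
  "H_SCI PA PB QA QB w =
     w *\<^sub>R matrix_inv (PA + w *\<^sub>R QA) + (1 - w) *\<^sub>R matrix_inv (PB + (1 - w) *\<^sub>R QB)"

end

theory Submission
  imports Defs
begin

lemma mm_bilinear: "bilinear ((**) :: real^'n^'m \<Rightarrow> real^'p^'n \<Rightarrow> real^'p^'m)"
  unfolding bilinear_def linear_iff
  by (auto simp: matrix_matrix_mult_def vec_eq_iff sum.distrib algebra_simps sum_distrib_left)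

lemma mm_bb: "bounded_bilinear ((**) :: real^'n^'m \<Rightarrow> real^'p^'n \<Rightarrow> real^'p^'m)"
  using mm_bilinear bilinear_conv_bounded_bilinear by blast

lemmas mmadd_l = bounded_bilinear.add_left[OF mm_bb]
lemmas mmadd_r = bounded_bilinear.add_right[OF mm_bb]
lemmas mmdiff_l = bounded_bilinear.diff_left[OF mm_bb]
lemmas mmdiff_r = bounded_bilinear.diff_right[OF mm_bb]
lemmas mmsc_l = bounded_bilinear.scaleR_left[OF mm_bb]
lemmas mmsc_r = bounded_bilinear.scaleR_right[OF mm_bb]
lemmas mmmin_l = bounded_bilinear.minus_left[OF mm_bb]
lemmas mmmin_r = bounded_bilinear.minus_right[OF mm_bb]

lemma tendsto_det[tendsto_intros]:
  fixes g :: "'a \<Rightarrow> real^'n^'n"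
  assumes "(g \<longlongrightarrow> A) F"
  shows "((\<lambda>t. det (g t)) \<longlongrightarrow> det A) F"
  unfolding det_def by (intro tendsto_intros assms)

lemma inv_ok:
  fixes A :: "real^'n^'n"
  assumes "invertible A"
  shows "A ** matrix_inv A = mat 1" "matrix_inv A ** A = mat 1"
  using someI_ex[OF assms[unfolded invertible_def]] unfolding matrix_inv_def by auto

lemma inv_cramer:
  fixes A :: "real^'n^'n"
  assumes "det A \<noteq> 0"
  shows "matrix_inv A = (\<chi> k j. det(\<chi> i l. if l=k then axis j 1 $ i else A$i$l) / det A)"
proof -
  have inv: "invertible A" using assms invertible_det_nz by blast
  have "matrix_inv A $ k $ j = det(\<chi> i l. if l=k then axis j 1 $ i else A$i$l) / det A" for k j
  proof -
    have "A *v (matrix_inv A *v axis j 1) = axis j 1"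
      by (simp add: matrix_vector_mul_assoc inv_ok[OF inv])
    then have "matrix_inv A *v axis j 1 = (\<chi> k. det(\<chi> i l. if l=k then axis j 1 $ i else A$i$l) / det A)"
      using cramer[OF assms] by blast
    moreover have "(matrix_inv A *v axis j 1) $ k = matrix_inv A $ k $ j"
      by (simp add: matrix_vector_mult_def axis_def if_distrib cong: if_cong)
    ultimately show ?thesis by simp
  qed
  then show ?thesis by (simp add: vec_eq_iff)
qed

lemma tendsto_inv:
  fixes g :: "'a \<Rightarrow> real^'n^'n"
  assumes "(g \<longlongrightarrow> A) F" "det A \<noteq> 0"
  shows "((\<lambda>t. matrix_inv (g t)) \<longlongrightarrow> matrix_inv A) F"
proof -
  have ev: "eventually (\<lambda>t. det (g t) \<noteq> 0) F"
    using tendsto_imp_eventually_ne[OF tendsto_det[OF assms(1)] assms(2)] .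
  have "((\<lambda>t. (\<chi> k j. det(\<chi> i l. if l=k then axis j 1 $ i else g t$i$l) / det (g t))) \<longlongrightarrow>
     (\<chi> k j. det(\<chi> i l. if l=k then axis j 1 $ i else A$i$l) / det A)) F"
    apply (intro tendsto_intros assms)
    subgoal for k j i l by (cases "l = k") (auto intro!: tendsto_intros assms)
    done
  then have "((\<lambda>t. (\<chi> k j. det(\<chi> i l. if l=k then axis j 1 $ i else g t$i$l) / det (g t))) \<longlongrightarrow>
     matrix_inv A) F" using inv_cramer[OF assms(2)] by simp
  then show ?thesis
    by (rule Lim_transform_eventually) (use ev in \<open>auto elim!: eventually_mono simp: inv_cramer\<close>)
qed

lemma inv_deriv:
  fixes P Q :: "real^'n^'n"
  assumes "det (P + (a + b * t) *\<^sub>R Q) \<noteq> 0"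
  shows "((\<lambda>s. matrix_inv (P + (a + b * s) *\<^sub>R Q)) has_vector_derivative
     (- (b *\<^sub>R (matrix_inv (P + (a+b * t)*\<^sub>R Q) ** Q ** matrix_inv (P + (a+b * t)*\<^sub>R Q))))) (at t)"
proof -
  define M where "M = (\<lambda>s. P + (a + b * s) *\<^sub>R Q)"
  define N where "N = (\<lambda>s. matrix_inv (M s))"
  have dt: "det (M t) \<noteq> 0" using assms by (simp add: M_def)
  have Mc: "(M \<longlongrightarrow> M t) (at t)" unfolding M_def by (intro tendsto_intros)
  have Nc: "(N \<longlongrightarrow> N t) (at t)" unfolding N_def by (rule tendsto_inv[OF Mc dt])
  have ev: "eventually (\<lambda>s. det (M s) \<noteq> 0) (at t)"
    using tendsto_imp_eventually_ne[OF tendsto_det[OF Mc] dt] .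
  have Mdiff: "M t - M s = (b*(t-s)) *\<^sub>R Q" for s
    by (simp add: M_def algebra_simps)
  have key: "N s - N t = -(b*(s-t)) *\<^sub>R (N s ** Q ** N t)" if ds: "det (M s) \<noteq> 0" for s
  proof -
    have is_: "invertible (M s)" "invertible (M t)" using ds dt invertible_det_nz by auto
    have "N s = N s ** (M t ** N t)" unfolding N_def by (simp add: inv_ok[OF is_(2)])
    moreover have "N t = (N s ** M s) ** N t" unfolding N_def by (simp add: inv_ok[OF is_(1)])
    ultimately have "N s - N t = (N s ** (M t - M s)) ** N t"
      by (metis matrix_mul_assoc mmdiff_l mmdiff_r)
    also have "\<dots> = (b*(t-s)) *\<^sub>R (N s ** Q ** N t)"
      by (simp add: Mdiff mmsc_l mmsc_r)
    finally show ?thesis by (simp add: algebra_simps)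
  qed
  define D where "D = - (b *\<^sub>R (N t ** Q ** N t))"
  have lim0: "((\<lambda>y. \<bar>b\<bar> * norm ((N y - N t) ** Q ** N t)) \<longlongrightarrow> 0) (at t)"
  proof -
    have "((\<lambda>y. (N y - N t) ** Q ** N t) \<longlongrightarrow> (N t - N t) ** Q ** N t) (at t)"
      by (intro bounded_bilinear.tendsto[OF mm_bb] tendsto_intros Nc)
    then have "((\<lambda>y. \<bar>b\<bar> * norm ((N y - N t) ** Q ** N t)) \<longlongrightarrow> \<bar>b\<bar> * norm ((N t - N t) ** Q ** N t)) (at t)"
      by (intro tendsto_intros)
    then show ?thesis by (simp add: bounded_bilinear.zero_left[OF mm_bb])
  qed
  have "(N has_derivative (\<lambda>h. h *\<^sub>R D)) (at t)"
    unfolding has_derivative_at_within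
  proof (intro conjI)
    show "bounded_linear (\<lambda>h. h *\<^sub>R D)" by (rule bounded_linear_scaleR_left)
    show "((\<lambda>y. (N y - N t - (y - t) *\<^sub>R D) /\<^sub>R norm (y - t)) \<longlongrightarrow> 0) (at t)"
    proof (rule Lim_null_comparison[OF _ lim0])
      show "eventually (\<lambda>y. norm ((N y - N t - (y - t) *\<^sub>R D) /\<^sub>R norm (y - t)) \<le> \<bar>b\<bar> * norm ((N y - N t) ** Q ** N t)) (at t)"
        using ev
      proof (rule eventually_mono)
        fix y assume "det (M y) \<noteq> 0"
        then have "N y - N t - (y - t) *\<^sub>R D = -(b*(y-t)) *\<^sub>R (N y ** Q ** N t - N t ** Q ** N t)"
          by (simp add: key D_def algebra_simps)
        also have "N y ** Q ** N t - N t ** Q ** N t = (N y - N t) ** Q ** N t"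
          by (simp add: mmdiff_l)
        finally have "N y - N t - (y - t) *\<^sub>R D = -(b*(y-t)) *\<^sub>R ((N y - N t) ** Q ** N t)" .
        then have "norm (N y - N t - (y - t) *\<^sub>R D) = \<bar>b\<bar> * \<bar>y - t\<bar> * norm ((N y - N t) ** Q ** N t)"
          by (simp add: abs_mult)
        then show "norm ((N y - N t - (y - t) *\<^sub>R D) /\<^sub>R norm (y - t)) \<le> \<bar>b\<bar> * norm ((N y - N t) ** Q ** N t)"
          unfolding norm_scaleR by (cases "y = t") (auto simp: field_simps)
      qed
    qed
  qed
  then show ?thesis unfolding has_vector_derivative_def D_def N_def M_def .
qed

lemma hvd_eq: "(f has_vector_derivative D) F \<Longrightarrow> D = E \<Longrightarrow> (f has_vector_derivative E) F"
  by simp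

lemma gen:
  fixes P Q :: "real^'n^'n" and a b w :: real
  defines "N \<equiv> \<lambda>t. matrix_inv (P + (a + b * t) *\<^sub>R Q)"
  assumes dw: "det (P + (a + b * w) *\<^sub>R Q) \<noteq> 0" and bb: "b * b = 1"
  shows "\<exists>S. open S \<and> w \<in> S \<and> (\<forall>t\<in>S. ((\<lambda>t. (a + b * t) *\<^sub>R N t) has_vector_derivative
            (b *\<^sub>R N t - ((a + b * t) * b) *\<^sub>R (N t ** Q ** N t))) (at t))"
    and "((\<lambda>t. b *\<^sub>R N t - ((a + b * t) * b) *\<^sub>R (N t ** Q ** N t)) has_vector_derivative
            (-2 *\<^sub>R (N w ** Q ** N w) + (2 * (a + b * w)) *\<^sub>R (N w ** Q ** N w ** Q ** N w))) (at w)"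
proof -
  define S where "S = {t. det (P + (a + b * t) *\<^sub>R Q) \<noteq> 0}"
  have "continuous_on UNIV (\<lambda>t. det (P + (a + b * t) *\<^sub>R Q))"
    by (intro continuous_at_imp_continuous_on ballI, unfold isCont_def) (intro tendsto_intros)
  then have oS: "open S" unfolding S_def by (intro open_Collect_neq continuous_on_const)
  have ND: "(N has_vector_derivative (- (b *\<^sub>R (N t ** Q ** N t)))) (at t)" if "t \<in> S" for t
    using inv_deriv[of P a b t Q] that unfolding S_def N_def by simp
  have "\<forall>t\<in>S. ((\<lambda>t. (a + b * t) *\<^sub>R N t) has_vector_derivative
            (b *\<^sub>R N t - ((a + b * t) * b) *\<^sub>R (N t ** Q ** N t))) (at t)"
  proof
    fix t assume "t \<in> S"
    have "((\<lambda>t. a + b * t) has_field_derivative b) (at t)"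
      by (auto intro!: derivative_eq_intros)
    from has_vector_derivative_scaleR[OF this ND[OF \<open>t \<in> S\<close>]]
    show "((\<lambda>t. (a + b * t) *\<^sub>R N t) has_vector_derivative
            (b *\<^sub>R N t - ((a + b * t) * b) *\<^sub>R (N t ** Q ** N t))) (at t)"
      by (rule hvd_eq) (simp add: algebra_simps)
  qed
  moreover have "w \<in> S" using dw by (simp add: S_def)
  ultimately show "\<exists>S. open S \<and> w \<in> S \<and> (\<forall>t\<in>S. ((\<lambda>t. (a + b * t) *\<^sub>R N t) has_vector_derivative
            (b *\<^sub>R N t - ((a + b * t) * b) *\<^sub>R (N t ** Q ** N t))) (at t))" using oS by blast
  have Nw: "(N has_vector_derivative (- (b *\<^sub>R (N w ** Q ** N w)))) (at w)"
    using ND \<open>w \<in> S\<close> by blast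
  have NQ: "((\<lambda>t. N t ** Q) has_vector_derivative (N w ** 0 + (- (b *\<^sub>R (N w ** Q ** N w))) ** Q)) (at w)"
    by (rule bounded_bilinear.has_vector_derivative[OF mm_bb Nw has_vector_derivative_const])
  have NQN: "((\<lambda>t. N t ** Q ** N t) has_vector_derivative
       ((N w ** Q) ** (- (b *\<^sub>R (N w ** Q ** N w))) + (N w ** 0 + (- (b *\<^sub>R (N w ** Q ** N w))) ** Q) ** N w)) (at w)"
    by (rule bounded_bilinear.has_vector_derivative[OF mm_bb NQ Nw])
  have bbx: "b * (b * x) = x" for x by (metis bb mult.assoc mult_1)
  have cb: "((\<lambda>t. (a + b * t) * b) has_field_derivative b * b) (at w)"
    by (auto intro!: derivative_eq_intros)
  have "((\<lambda>t. b *\<^sub>R N t - ((a + b * t) * b) *\<^sub>R (N t ** Q ** N t)) has_vector_derivative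
     (b *\<^sub>R (- (b *\<^sub>R (N w ** Q ** N w))) - (((a + b * w) * b) *\<^sub>R
        ((N w ** Q) ** (- (b *\<^sub>R (N w ** Q ** N w))) + (N w ** 0 + (- (b *\<^sub>R (N w ** Q ** N w))) ** Q) ** N w)
       + (b * b) *\<^sub>R (N w ** Q ** N w)))) (at w)"
    by (intro has_vector_derivative_diff has_vector_derivative_scaleR cb NQN
        bounded_linear.has_vector_derivative[OF bounded_linear_scaleR_right Nw])
  then show "((\<lambda>t. b *\<^sub>R N t - ((a + b * t) * b) *\<^sub>R (N t ** Q ** N t)) has_vector_derivative
            (-2 *\<^sub>R (N w ** Q ** N w) + (2 * (a + b * w)) *\<^sub>R (N w ** Q ** N w ** Q ** N w))) (at w)"
    by (rule hvd_eq) (simp add: mmsc_l mmsc_r mmmin_l mmmin_r matrix_mul_assoc algebra_simps bb bbx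
         bounded_bilinear.zero_right[OF mm_bb] scaleR_2, simp add: vec_eq_iff algebra_simps)
qed

lemma symmove:
  fixes A :: "real^'n^'n"
  assumes "transpose A = A"
  shows "u \<bullet> (A *v v) = (A *v u) \<bullet> v"
  by (metis assms dot_lmul_matrix transpose_matrix_vector)

lemma spd_inv:
  fixes M :: "real^'n^'n"
  assumes "sym_pos_def M"
  shows "invertible M" "transpose (matrix_inv M) = matrix_inv M"
proof -
  have sM: "transpose M = M" and pM: "\<And>x. x \<noteq> 0 \<Longrightarrow> 0 < x \<bullet> (M *v x)"
    using assms by (auto simp: sym_pos_def_def)
  have "inj ((*v) M)"
  proof (rule injI)
    fix x y assume "M *v x = M *v y"
    then have "M *v (x - y) = 0" by (simp add: matrix_vector_mult_diff_distrib)
    then show "x = y" using pM[of "x - y"] by auto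
  qed
  then show inv: "invertible M"
    using matrix_left_invertible_injective invertible_left_inverse by blast
  have "transpose (matrix_inv M) ** M = mat 1"
    by (metis inv inv_ok(1) matrix_transpose_mul sM transpose_mat)
  note T = this
  have "transpose (matrix_inv M) = transpose (matrix_inv M) ** (M ** matrix_inv M)"
    by (simp add: inv_ok[OF inv])
  also have "\<dots> = (transpose (matrix_inv M) ** M) ** matrix_inv M" by (rule matrix_mul_assoc)
  also have "\<dots> = matrix_inv M" by (simp add: T)
  finally show "transpose (matrix_inv M) = matrix_inv M" .
qed

lemma smv: "((s::real) *\<^sub>R (Q::real^'n^'m)) *v x = s *\<^sub>R (Q *v x)"
  by (simp add: matrix_vector_mult_def vec_eq_iff sum_distrib_left algebra_simps)

lemma spd_comb:
  fixes P Q :: "real^'n^'n"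
  assumes "sym_pos_def P" "sym_pos_def Q" "s \<ge> 0"
  shows "sym_pos_def (P + s *\<^sub>R Q)"
proof -
  have "transpose (P + s *\<^sub>R Q) = P + s *\<^sub>R Q"
    using assms unfolding sym_pos_def_def by (simp add: transpose_def vec_eq_iff)
  moreover have "0 < x \<bullet> ((P + s *\<^sub>R Q) *v x)" if "x \<noteq> 0" for x
  proof -
    have "0 < x \<bullet> (P *v x)" "0 < x \<bullet> (Q *v x)" using assms that unfolding sym_pos_def_def by auto
    then have "0 < x \<bullet> (P *v x) + s * (x \<bullet> (Q *v x))" using assms(3) by (simp add: add_pos_nonneg)
    then show ?thesis
      by (simp add: matrix_vector_mult_add_rdistrib inner_add_right smv)
  qed
  ultimately show ?thesis unfolding sym_pos_def_def by blast
qed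

lemma psd:
  fixes P :: "real^'n^'n"
  assumes "sym_pos_def P"
  shows "0 \<le> x \<bullet> (P *v x)"
  using assms unfolding sym_pos_def_def by (cases "x = 0") (auto intro: less_imp_le)

lemma neg_main:
  fixes P Q :: "real^'n^'n" and s :: real
  defines "N \<equiv> matrix_inv (P + s *\<^sub>R Q)"
  assumes sP: "sym_pos_def P" and sQ: "sym_pos_def Q" and s0: "s \<ge> 0"
  shows "sym_neg_def (-2 *\<^sub>R (N ** Q ** N) + (2 * s) *\<^sub>R (N ** Q ** N ** Q ** N))"
proof -
  define M where "M = P + s *\<^sub>R Q"
  have sM: "sym_pos_def M" unfolding M_def by (rule spd_comb[OF sP sQ s0])
  have iM: "invertible M" and tN: "transpose N = N" using spd_inv[OF sM] by (auto simp: N_def M_def)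
  have tP: "transpose P = P" and tQ: "transpose Q = Q" and tM: "transpose M = M"
    using sP sQ sM by (auto simp: sym_pos_def_def)
  have pP: "\<And>x. x \<noteq> 0 \<Longrightarrow> 0 < x \<bullet> (P *v x)" and pQ: "\<And>x. x \<noteq> 0 \<Longrightarrow> 0 < x \<bullet> (Q *v x)"
    using sP sQ by (auto simp: sym_pos_def_def)
  have MN: "M *v (N *v z) = z" for z
    by (simp add: matrix_vector_mul_assoc N_def M_def[symmetric] inv_ok[OF iM])
  have NM: "N *v (M *v z) = z" for z
    by (simp add: matrix_vector_mul_assoc N_def M_def[symmetric] inv_ok[OF iM])
  have Mv: "M *v z = P *v z + s *\<^sub>R (Q *v z)" for z
    by (simp add: M_def matrix_vector_mult_add_rdistrib smv)
  let ?X = "-2 *\<^sub>R (N ** Q ** N) + (2 * s) *\<^sub>R (N ** Q ** N ** Q ** N)"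
  have "transpose ?X = -2 *\<^sub>R transpose (N ** Q ** N) + (2 * s) *\<^sub>R transpose (N ** Q ** N ** Q ** N)"
    by (simp add: transpose_def vec_eq_iff)
  also have "\<dots> = ?X" by (simp add: matrix_transpose_mul tN tQ matrix_mul_assoc)
  finally have symX: "transpose ?X = ?X" .
  have "x \<bullet> (?X *v x) < 0" if x0: "x \<noteq> 0" for x
  proof -
    define y where "y = N *v x"
    define q where "q = N *v (Q *v y)"
    define r where "r = y - s *\<^sub>R q"
    have y0: "y \<noteq> 0" using x0 MN[of x] by (auto simp: y_def)
    have Mq: "M *v q = Q *v y" by (simp add: q_def MN)
    have xX: "x \<bullet> (?X *v x) = -2 * (y \<bullet> (Q *v y)) + 2 * s * ((Q *v y) \<bullet> q)"
    proof -
      have "x \<bullet> (?X *v x) = -2 * (x \<bullet> (N *v (Q *v (N *v x)))) + 2 * s * (x \<bullet> (N *v (Q *v (N *v (Q *v (N *v x))))))"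
        by (simp only: matrix_vector_mult_add_rdistrib smv matrix_vector_mul_assoc[symmetric]
            inner_add_right inner_scaleR_right)
      also have "x \<bullet> (N *v (Q *v (N *v x))) = y \<bullet> (Q *v y)"
        unfolding y_def by (rule symmove[OF tN])
      also have "x \<bullet> (N *v (Q *v (N *v (Q *v (N *v x))))) = (Q *v y) \<bullet> q"
        using symmove[OF tN, of x "Q *v (N *v (Q *v y))"] symmove[OF tQ, of y "N *v (Q *v y)"]
        by (simp add: y_def[symmetric] q_def inner_commute)
      finally show ?thesis .
    qed
    have "M *v r = M *v y - s *\<^sub>R (M *v q)"
      by (simp add: r_def matrix_vector_mult_diff_distrib matrix_vector_mult_scaleR)
    also have "\<dots> = P *v y" by (simp add: Mq Mv[of y])
    finally have Mr: "M *v r = P *v y" .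
    define E where "E = y \<bullet> (Q *v y) - s * ((Q *v y) \<bullet> q)"
    have EqP: "E = q \<bullet> (P *v y)"
    proof -
      have "q \<bullet> (P *v y) = q \<bullet> (M *v r)" by (simp add: Mr)
      also have "\<dots> = (M *v q) \<bullet> r" by (rule symmove[OF tM])
      also have "\<dots> = (Q *v y) \<bullet> y - s * ((Q *v y) \<bullet> q)"
        by (simp add: Mq r_def inner_diff_right)
      finally show ?thesis by (simp add: E_def inner_commute)
    qed
    have "E > 0"
    proof (cases "s = 0")
      case True
      then show ?thesis using pQ[OF y0] by (simp add: E_def)
    next
      case False
      then have sp: "s > 0" using s0 by simp
      have yrq: "y = r + s *\<^sub>R q" by (simp add: r_def)
      have "P *v r + s *\<^sub>R (Q *v r) = P *v y" using Mr Mv[of r] by simp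
      also have "P *v y = P *v r + s *\<^sub>R (P *v q)"
        by (subst yrq) (simp only: matrix_vector_right_distrib matrix_vector_mult_scaleR)
      finally have Qr: "Q *v r = P *v q" using sp by simp
      have "E = q \<bullet> (P *v r) + s * (q \<bullet> (P *v q))"
        by (simp add: EqP yrq matrix_vector_right_distrib matrix_vector_mult_scaleR inner_add_right)
      also have "q \<bullet> (P *v r) = r \<bullet> (Q *v r)"
        using symmove[OF tP, of q r] Qr by (simp add: inner_commute)
      finally have E2: "E = r \<bullet> (Q *v r) + s * (q \<bullet> (P *v q))" .
      show ?thesis
      proof (cases "r = 0")
        case True
        then have "q \<noteq> 0" using y0 yrq by auto
        then show ?thesis using E2 pP[of q] sp True by simp
      next
        case False
        then show ?thesis using E2 pQ[of r] psd[OF sP, of q] sp by (simp add: add_pos_nonneg)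
      qed
    qed
    then show ?thesis using xX by (simp add: E_def algebra_simps)
  qed
  then show ?thesis using symX unfolding sym_neg_def_def by blast
qed

lemma neg_add:
  fixes A B :: "real^'n^'n"
  assumes "sym_neg_def A" "sym_neg_def B"
  shows "sym_neg_def (A + B)"
proof -
  have "transpose (A + B) = transpose A + transpose B" by (simp add: transpose_def vec_eq_iff)
  then show ?thesis using assms unfolding sym_neg_def_def
    by (auto simp: matrix_vector_mult_add_rdistrib inner_add_right add_neg_neg)
qed

theorem lemma3:
  fixes PA PB QA QB :: "real^'n^'n"
  assumes "sym_pos_def PA" "sym_pos_def PB" "sym_pos_def QA" "sym_pos_def QB"
    and "w \<in> {0..1}"
  shows "(\<forall>\<^sub>F t in nhds w. H_SCI PA PB QA QB differentiable (at t))
    \<and> (\<lambda>t. vector_derivative (H_SCI PA PB QA QB) (at t)) differentiable (at w)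
    \<and> sym_neg_def (vector_derivative (\<lambda>t. vector_derivative (H_SCI PA PB QA QB) (at t)) (at w))"
proof -
  define NA where "NA = (\<lambda>t. matrix_inv (PA + t *\<^sub>R QA))"
  define NB where "NB = (\<lambda>t. matrix_inv (PB + (1 - t) *\<^sub>R QB))"
  have w0: "w \<ge> 0" "1 - w \<ge> 0" using assms(5) by auto
  have dA: "det (PA + (0 + 1 * w) *\<^sub>R QA) \<noteq> 0"
    using spd_inv(1)[OF spd_comb[OF assms(1) assms(3) w0(1)]] by (simp add: invertible_det_nz[symmetric])
  have dB: "det (PB + (1 + -1 * w) *\<^sub>R QB) \<noteq> 0"
    using spd_inv(1)[OF spd_comb[OF assms(2) assms(4) w0(2)]] by (simp add: invertible_det_nz[symmetric])
  define hA1 where "hA1 = (\<lambda>t. 1 *\<^sub>R NA t - ((0 + 1 * t) * 1) *\<^sub>R (NA t ** QA ** NA t))"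
  define hB1 where "hB1 = (\<lambda>t. (-1) *\<^sub>R NB t - ((1 + -1 * t) * -1) *\<^sub>R (NB t ** QB ** NB t))"
  obtain SA where SA: "open SA" "w \<in> SA"
    "\<And>t. t \<in> SA \<Longrightarrow> ((\<lambda>t. (0 + 1 * t) *\<^sub>R NA t) has_vector_derivative hA1 t) (at t)"
    using gen(1)[where P=PA and a=0 and b=1 and Q=QA and w=w, OF dA] by (auto simp: NA_def hA1_def)
  obtain SB where SB: "open SB" "w \<in> SB"
    "\<And>t. t \<in> SB \<Longrightarrow> ((\<lambda>t. (1 + -1 * t) *\<^sub>R NB t) has_vector_derivative hB1 t) (at t)"
    using gen(1)[where P=PB and a=1 and b="-1" and Q=QB and w=w, OF dB] by (auto simp: NB_def hB1_def)
  have HA2: "(hA1 has_vector_derivative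
      (-2 *\<^sub>R (NA w ** QA ** NA w) + (2 * (0 + 1 * w)) *\<^sub>R (NA w ** QA ** NA w ** QA ** NA w))) (at w)"
    using gen(2)[where P=PA and a=0 and b=1 and Q=QA and w=w, OF dA] by (simp add: NA_def hA1_def)
  have HB2: "(hB1 has_vector_derivative
      (-2 *\<^sub>R (NB w ** QB ** NB w) + (2 * (1 + -1 * w)) *\<^sub>R (NB w ** QB ** NB w ** QB ** NB w))) (at w)"
    using gen(2)[where P=PB and a=1 and b="-1" and Q=QB and w=w, OF dB] by (simp add: NB_def hB1_def)
  have Heq: "H_SCI PA PB QA QB = (\<lambda>t. (0 + 1 * t) *\<^sub>R NA t + (1 + -1 * t) *\<^sub>R NB t)"
    by (simp add: H_SCI_def NA_def NB_def fun_eq_iff)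
  define S where "S = SA \<inter> SB"
  have S: "open S" "w \<in> S" using SA SB by (auto simp: S_def)
  have HD: "(H_SCI PA PB QA QB has_vector_derivative (hA1 t + hB1 t)) (at t)" if "t \<in> S" for t
    unfolding Heq using SA(3) SB(3) that by (auto simp: S_def intro!: has_vector_derivative_add)
  have ev: "\<forall>\<^sub>F t in nhds w. H_SCI PA PB QA QB differentiable (at t)"
    unfolding eventually_nhds using S HD by (auto simp: differentiable_def has_vector_derivative_def)
  define X where "X = (-2 *\<^sub>R (NA w ** QA ** NA w) + (2 * (0 + 1 * w)) *\<^sub>R (NA w ** QA ** NA w ** QA ** NA w))
     + (-2 *\<^sub>R (NB w ** QB ** NB w) + (2 * (1 + -1 * w)) *\<^sub>R (NB w ** QB ** NB w ** QB ** NB w))"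
  have "((\<lambda>t. hA1 t + hB1 t) has_vector_derivative X) (at w)"
    unfolding X_def by (intro has_vector_derivative_add HA2 HB2)
  then have D2: "((\<lambda>t. vector_derivative (H_SCI PA PB QA QB) (at t)) has_vector_derivative X) (at w)"
    by (rule has_vector_derivative_transform_within_open[OF _ S]) (auto intro!: vector_derivative_at[symmetric] HD)
  have negA: "sym_neg_def (-2 *\<^sub>R (NA w ** QA ** NA w) + (2 * (0 + 1 * w)) *\<^sub>R (NA w ** QA ** NA w ** QA ** NA w))"
    using neg_main[OF assms(1) assms(3) w0(1)] by (simp add: NA_def)
  have negB: "sym_neg_def (-2 *\<^sub>R (NB w ** QB ** NB w) + (2 * (1 + -1 * w)) *\<^sub>R (NB w ** QB ** NB w ** QB ** NB w))"
    using neg_main[OF assms(2) assms(4) w0(2)] by (simp add: NB_def)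
  have "sym_neg_def X" unfolding X_def by (rule neg_add[OF negA negB])
  then show ?thesis using ev D2 vector_derivative_at[OF D2]
    by (auto simp: differentiable_def has_vector_derivative_def)
qed

end
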